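(* Let $G_1,\dots,G_n$ be groups and $G\leqslant G_1\times\dots\times G_n$ a subgroup whose projection onto each $G_i$ is surjective. Suppose $G$ has abelian entanglements with respect to $G_1\times\dots\times G_n$, and let $S\subseteq\{1,\dots,n\}$ be nonempty. Then $G_S$ has abelian entanglements with respect to $\prod_{i\in S}G_i$.
   Context: For nonempty $S\subseteq\{1,\dots,n\}$, $G_S$ denotes the image of $G$ under the projection $G_1\times\dots\times G_n\to\prod_{i\in S}G_i$. For a subgroup $H\leqslant H_1\times\dots\times H_k$ surjecting onto each $H_i$, and a partition $\mathcal P=\{A,B\}$ of $\{1,\dots,k\}$ into two nonempty sets, $H$ is a subgroup of $H_A\times H_B$ surjecting onto both factors; with $N_A=\{x\in H_A:(x,1)\in H\}$ (normal in $H_A$), the Goursat quotient is $Q_{\mathcal P}=H_A/N_A$. $H$ has abelian entanglements with respect to $H_1\times\dots\times H_k$ if $Q_{\mathcal P}$ is abelian for all such $\mathcal P$. *)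

theory Defs
  imports "HOL-Algebra.Algebra"
begin

definition proj_set :: "'i set \<Rightarrow> ('i \<Rightarrow> 'a) set \<Rightarrow> ('i \<Rightarrow> 'a) set" where
  "proj_set A H = (\<lambda>x. restrict x A) ` H"

definition proj_group ::
  "('i \<Rightarrow> ('a, 'b) monoid_scheme) \<Rightarrow> 'i set \<Rightarrow> ('i \<Rightarrow> 'a) set \<Rightarrow> ('i \<Rightarrow> 'a) monoid" where
  "proj_group Gs A H = (product_group A Gs)\<lparr>carrier := proj_set A H\<rparr>"

definition goursat_kernel ::
  "('i \<Rightarrow> ('a, 'b) monoid_scheme) \<Rightarrow> 'i set \<Rightarrow> 'i set \<Rightarrow> ('i \<Rightarrow> 'a) set \<Rightarrow> ('i \<Rightarrow> 'a) set" where
  "goursat_kernel Gs A B H =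
     {x \<in> proj_set A H.
        (\<lambda>i. if i \<in> A then x i else if i \<in> B then \<one>\<^bsub>Gs i\<^esub> else undefined) \<in> H}"

definition goursat_quotient ::
  "('i \<Rightarrow> ('a, 'b) monoid_scheme) \<Rightarrow> 'i set \<Rightarrow> 'i set \<Rightarrow> ('i \<Rightarrow> 'a) set \<Rightarrow> ('i \<Rightarrow> 'a) set monoid" where
  "goursat_quotient Gs A B H = proj_group Gs A H Mod goursat_kernel Gs A B H"

definition abelian_entanglements ::
  "('i \<Rightarrow> ('a, 'b) monoid_scheme) \<Rightarrow> 'i set \<Rightarrow> ('i \<Rightarrow> 'a) set \<Rightarrow> bool" where
  "abelian_entanglements Gs I H \<longleftrightarrow>
     (\<forall>A B. A \<noteq> {} \<and> B \<noteq> {} \<and> A \<inter> B = {} \<and> A \<union> B = I \<longrightarrow>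
        comm_group (goursat_quotient Gs A B H))"

end

theory Submission
  imports Defs
begin

lemma quot_comm:
  fixes H (structure)
  assumes H: "group H" and N: "N \<lhd> H" and N': "N' \<lhd> H" and sub: "N \<subseteq> N'"
    and c: "comm_group (H Mod N)"
  shows "comm_group (H Mod N')"
proof -
  interpret group H by fact
  interpret N: normal N H by fact
  interpret N': normal N' H by fact
  interpret Q: comm_group "H Mod N" by fact
  show ?thesis
  proof (rule group.group_comm_groupI[OF N'.factorgroup_is_group])
    fix U V assume U: "U \<in> carrier (H Mod N')" and V: "V \<in> carrier (H Mod N')"
    then obtain x y where x: "x \<in> carrier H" "U = N' #>\<^bsub>H\<^esub> x"
      and y: "y \<in> carrier H" "V = N' #>\<^bsub>H\<^esub> y"
      by (auto simp: FactGroup_def RCOSETS_def)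
    have xN: "N #>\<^bsub>H\<^esub> x \<in> carrier (H Mod N)" and yN: "N #>\<^bsub>H\<^esub> y \<in> carrier (H Mod N)"
      using x y by (auto simp: FactGroup_def RCOSETS_def)
    have "(N #>\<^bsub>H\<^esub> x) <#>\<^bsub>H\<^esub> (N #>\<^bsub>H\<^esub> y) = (N #>\<^bsub>H\<^esub> y) <#>\<^bsub>H\<^esub> (N #>\<^bsub>H\<^esub> x)"
      using Q.m_comm[OF xN yN] by (simp add: FactGroup_def)
    hence e: "N #>\<^bsub>H\<^esub> (x \<otimes>\<^bsub>H\<^esub> y) = N #>\<^bsub>H\<^esub> (y \<otimes>\<^bsub>H\<^esub> x)"
      using x y by (simp add: N.rcos_sum)
    have "x \<otimes>\<^bsub>H\<^esub> y \<in> N #>\<^bsub>H\<^esub> (x \<otimes>\<^bsub>H\<^esub> y)"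
      using x y by (simp add: rcos_self N.subgroup_axioms)
    hence "x \<otimes>\<^bsub>H\<^esub> y \<in> N' #>\<^bsub>H\<^esub> (y \<otimes>\<^bsub>H\<^esub> x)"
      using e sub by (auto simp: r_coset_def)
    hence "N' #>\<^bsub>H\<^esub> (y \<otimes>\<^bsub>H\<^esub> x) = N' #>\<^bsub>H\<^esub> (x \<otimes>\<^bsub>H\<^esub> y)"
      using x y by (simp add: repr_independence N'.subgroup_axioms)
    thus "U \<otimes>\<^bsub>H Mod N'\<^esub> V = V \<otimes>\<^bsub>H Mod N'\<^esub> U"
      using x y by (simp add: FactGroup_def N'.rcos_sum)
  qed
qed

lemma restr_hom:
  assumes groups: "\<And>i. i \<in> I \<Longrightarrow> group (Gs i)" and A: "A \<subseteq> I"
  shows "(\<lambda>x. restrict x A) \<in> hom (product_group I Gs) (product_group A Gs)"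
  using A by (auto simp: hom_def PiE_def Pi_def fun_eq_iff)

lemma proj_group_group:
  assumes groups: "\<And>i. i \<in> I \<Longrightarrow> group (Gs i)" and A: "A \<subseteq> I"
    and sub: "subgroup G (product_group I Gs)"
  shows "group (proj_group Gs A G)"
    and "group_hom ((product_group I Gs)\<lparr>carrier := G\<rparr>) (proj_group Gs A G) (\<lambda>x. restrict x A)"
proof -
  have gI: "group (product_group I Gs)" using groups by simp
  have gA: "group (product_group A Gs)" by (rule product_group) (use groups A in auto)
  have gh: "group_hom (product_group I Gs) (product_group A Gs) (\<lambda>x. restrict x A)"
    using restr_hom[OF groups A] gI gA by (simp add: group_hom_def group_hom_axioms_def)
  have "subgroup (proj_set A G) (product_group A Gs)"
    unfolding proj_set_def by (rule group_hom.subgroup_img_is_subgroup[OF gh sub])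
  thus g: "group (proj_group Gs A G)" unfolding proj_group_def
    using gA by (rule subgroup.subgroup_is_group)
  have g1: "group ((product_group I Gs)\<lparr>carrier := G\<rparr>)"
    using sub gI by (rule subgroup.subgroup_is_group)
  have "(\<lambda>x. restrict x A) \<in> hom ((product_group I Gs)\<lparr>carrier := G\<rparr>) (proj_group Gs A G)"
    unfolding hom_def proj_group_def proj_set_def using A subgroup.subset[OF sub]
    by (auto simp: fun_eq_iff)
  thus "group_hom ((product_group I Gs)\<lparr>carrier := G\<rparr>) (proj_group Gs A G) (\<lambda>x. restrict x A)"
    using g g1 by (simp add: group_hom_def group_hom_axioms_def)
qed

lemma proj_proj:
  assumes "A \<subseteq> J" shows "proj_set A (proj_set J G) = proj_set A G"
  unfolding proj_set_def image_image using assms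
  by (intro image_cong refl) (auto simp: fun_eq_iff)

lemma kernel_eq:
  assumes A: "A \<subseteq> J" and B: "B \<subseteq> J" and AB: "A \<inter> B = {}" "A \<union> B = J"
    and J: "J \<subseteq> I" and sub: "G \<subseteq> carrier (product_group I Gs)"
  shows "goursat_kernel Gs A B (proj_set J G) =
    (\<lambda>x. restrict x A) ` kernel ((product_group I Gs)\<lparr>carrier := G\<rparr>) (proj_group Gs B G) (\<lambda>x. restrict x B)"
proof (intro equalityI subsetI)
  fix x assume x: "x \<in> goursat_kernel Gs A B (proj_set J G)"
  have "x \<in> proj_set A G" using x A by (simp add: goursat_kernel_def proj_proj)
  then obtain g where g: "g \<in> G" "x = restrict g A"
    by (auto simp: proj_set_def)
  from x obtain h where h: "h \<in> G"
    "(\<lambda>i. if i \<in> A then x i else if i \<in> B then \<one>\<^bsub>Gs i\<^esub> else undefined) = restrict h J"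
    by (auto simp: goursat_kernel_def proj_set_def)
  have hA: "h i = x i" if i: "i \<in> A" for i
    using fun_cong[OF h(2), of i] A i by auto
  have hB: "h i = \<one>\<^bsub>Gs i\<^esub>" if i: "i \<in> B" for i
  proof -
    have "i \<notin> A" using AB(1) i by blast
    thus ?thesis using fun_cong[OF h(2), of i] B i by auto
  qed
  have "x = restrict h A" using hA g(2) by (auto simp: fun_eq_iff)
  moreover have "h \<in> kernel ((product_group I Gs)\<lparr>carrier := G\<rparr>) (proj_group Gs B G) (\<lambda>x. restrict x B)"
    using h(1) hB by (auto simp: kernel_def proj_group_def fun_eq_iff)
  ultimately show "x \<in> (\<lambda>x. restrict x A) ` kernel ((product_group I Gs)\<lparr>carrier := G\<rparr>) (proj_group Gs B G) (\<lambda>x. restrict x B)"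
    by blast
next
  fix x assume "x \<in> (\<lambda>x. restrict x A) ` kernel ((product_group I Gs)\<lparr>carrier := G\<rparr>) (proj_group Gs B G) (\<lambda>x. restrict x B)"
  then obtain g where gk: "g \<in> kernel ((product_group I Gs)\<lparr>carrier := G\<rparr>) (proj_group Gs B G) (\<lambda>x. restrict x B)"
    and gx: "x = restrict g A" by blast
  have g0: "g \<in> G" "restrict g B = (\<lambda>i\<in>B. \<one>\<^bsub>Gs i\<^esub>)"
    using gk by (simp_all add: kernel_def proj_group_def)
  have g1: "g i = \<one>\<^bsub>Gs i\<^esub>" if i: "i \<in> B" for i
    using fun_cong[OF g0(2), of i] i by simp
  note g = g0(1) g1 gx
  have "(\<lambda>i. if i \<in> A then x i else if i \<in> B then \<one>\<^bsub>Gs i\<^esub> else undefined) = restrict g J"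
    using g AB by (auto simp: fun_eq_iff)
  hence "(\<lambda>i. if i \<in> A then x i else if i \<in> B then \<one>\<^bsub>Gs i\<^esub> else undefined) \<in> proj_set J G"
    using g(1) by (auto simp: proj_set_def)
  moreover have "x \<in> proj_set A G" using g by (auto simp: proj_set_def)
  ultimately show "x \<in> goursat_kernel Gs A B (proj_set J G)"
    using A by (simp add: goursat_kernel_def proj_proj)
qed

lemma kernel_normal:
  assumes groups: "\<And>i. i \<in> I \<Longrightarrow> group (Gs i)"
    and A: "A \<subseteq> J" and B: "B \<subseteq> J" and AB: "A \<inter> B = {}" "A \<union> B = J"
    and J: "J \<subseteq> I" and sub: "subgroup G (product_group I Gs)"
  shows "goursat_kernel Gs A B (proj_set J G) \<lhd> proj_group Gs A G"
proof -
  have ghA: "group_hom ((product_group I Gs)\<lparr>carrier := G\<rparr>) (proj_group Gs A G) (\<lambda>x. restrict x A)"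
    using proj_group_group(2)[OF groups _ sub] A J by auto
  have ghB: "group_hom ((product_group I Gs)\<lparr>carrier := G\<rparr>) (proj_group Gs B G) (\<lambda>x. restrict x B)"
    using proj_group_group(2)[OF groups _ sub] B J by auto
  have n: "kernel ((product_group I Gs)\<lparr>carrier := G\<rparr>) (proj_group Gs B G) (\<lambda>x. restrict x B)
      \<lhd> (product_group I Gs)\<lparr>carrier := G\<rparr>"
    by (rule group_hom.normal_kernel[OF ghB])
  have s: "(\<lambda>x. restrict x A) ` carrier ((product_group I Gs)\<lparr>carrier := G\<rparr>) = carrier (proj_group Gs A G)"
    by (simp add: proj_group_def proj_set_def)
  show ?thesis
    using normal.surj_hom_normal_subgroup[OF n ghA s]
      kernel_eq[OF A B AB J subgroup.subset[OF sub]] by simp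
qed

theorem proposition2p7:
  fixes Gs :: "nat \<Rightarrow> ('a, 'b) monoid_scheme"
    and G :: "(nat \<Rightarrow> 'a) set"
    and n :: nat and S :: "nat set"
  assumes groups: "\<And>i. i \<in> {1..n} \<Longrightarrow> group (Gs i)"
    and sub: "subgroup G (product_group {1..n} Gs)"
    and surj: "\<And>i. i \<in> {1..n} \<Longrightarrow> (\<lambda>x. x i) ` G = carrier (Gs i)"
    and ent: "abelian_entanglements Gs {1..n} G"
    and S: "S \<subseteq> {1..n}" "S \<noteq> {}"
  shows "abelian_entanglements Gs S (proj_set S G)"
  unfolding abelian_entanglements_def
proof (intro allI impI, elim conjE)
  fix A B assume A: "A \<noteq> {}" and B: "B \<noteq> {}" and AB: "A \<inter> B = {}" "A \<union> B = S"
  define B' where "B' = {1..n} - A"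
  have AS: "A \<subseteq> S" and BS: "B \<subseteq> S" using AB by auto
  have AI: "A \<subseteq> {1..n}" using AS S by auto
  have B'I: "B' \<subseteq> {1..n}" unfolding B'_def by auto
  have AB'1: "A \<inter> B' = {}" unfolding B'_def by auto
  have AB'2: "A \<union> B' = {1..n}" unfolding B'_def using AI by auto
  have BB: "B \<subseteq> B'" unfolding B'_def using BS S AB(1) by auto
  have B'ne: "B' \<noteq> {}" using B BB by auto
  have GG: "proj_set {1..n} G = G"
  proof -
    have "\<And>g. g \<in> G \<Longrightarrow> restrict g {1..n} = g"
      using subgroup.subset[OF sub] by (auto simp: PiE_def extensional_restrict)
    thus ?thesis by (simp add: proj_set_def)
  qed
  have c0: "comm_group (goursat_quotient Gs A B' G)"
    by (rule ent[unfolded abelian_entanglements_def, THEN spec[of _ A], THEN spec[of _ B'], THEN mp])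
       (use A B'ne AB'1 AB'2 in blast)
  have n0: "goursat_kernel Gs A B' G \<lhd> proj_group Gs A G"
    using kernel_normal[OF groups AI B'I AB'1 AB'2 order_refl sub] GG by simp
  have n1: "goursat_kernel Gs A B (proj_set S G) \<lhd> proj_group Gs A G"
    by (rule kernel_normal[OF groups AS BS AB S(1) sub])
  have e0: "goursat_kernel Gs A B' G =
    (\<lambda>x. restrict x A) ` kernel ((product_group {1..n} Gs)\<lparr>carrier := G\<rparr>) (proj_group Gs B' G) (\<lambda>x. restrict x B')"
    using kernel_eq[OF AI B'I AB'1 AB'2 order_refl subgroup.subset[OF sub]] GG by simp
  have e1: "goursat_kernel Gs A B (proj_set S G) =
    (\<lambda>x. restrict x A) ` kernel ((product_group {1..n} Gs)\<lparr>carrier := G\<rparr>) (proj_group Gs B G) (\<lambda>x. restrict x B)"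
    by (rule kernel_eq[OF AS BS AB S(1) subgroup.subset[OF sub]])
  have kk: "kernel ((product_group {1..n} Gs)\<lparr>carrier := G\<rparr>) (proj_group Gs B' G) (\<lambda>x. restrict x B')
     \<subseteq> kernel ((product_group {1..n} Gs)\<lparr>carrier := G\<rparr>) (proj_group Gs B G) (\<lambda>x. restrict x B)"
  proof
    fix g assume "g \<in> kernel ((product_group {1..n} Gs)\<lparr>carrier := G\<rparr>) (proj_group Gs B' G) (\<lambda>x. restrict x B')"
    hence g: "g \<in> G" "restrict g B' = (\<lambda>i\<in>B'. \<one>\<^bsub>Gs i\<^esub>)"
      by (simp_all add: kernel_def proj_group_def)
    have "restrict g B = (\<lambda>i\<in>B. \<one>\<^bsub>Gs i\<^esub>)"
    proof
      fix i show "restrict g B i = (\<lambda>i\<in>B. \<one>\<^bsub>Gs i\<^esub>) i"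
        using fun_cong[OF g(2), of i] BB by (cases "i \<in> B") auto
    qed
    thus "g \<in> kernel ((product_group {1..n} Gs)\<lparr>carrier := G\<rparr>) (proj_group Gs B G) (\<lambda>x. restrict x B)"
      using g(1) by (simp add: kernel_def proj_group_def)
  qed
  have ss: "goursat_kernel Gs A B' G \<subseteq> goursat_kernel Gs A B (proj_set S G)"
    unfolding e0 e1 using kk by (rule image_mono)
  have pp: "proj_group Gs A (proj_set S G) = proj_group Gs A G"
    using AS by (simp add: proj_group_def proj_proj)
  have gA: "group (proj_group Gs A G)"
    by (rule proj_group_group(1)[OF groups AI sub])
  show "comm_group (goursat_quotient Gs A B (proj_set S G))"
    unfolding goursat_quotient_def pp
    by (rule quot_comm[OF gA n0 n1 ss c0[unfolded goursat_quotient_def]])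
qed

end
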